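(* For every $n\ge 3$, under the uniform model, $$E_U(\Phi_n)=\binom{n}{2}\left(\frac{1}{2n-3}\,{}_3F_2\!\left(\begin{matrix}2,\ 2,\ 2-n\\ 1,\ 4-2n\end{matrix};2\right)-\frac12\cdot\frac{(2n-2)!!}{(2n-3)!!}\right),$$ where ${}_3F_2(\cdots;2)=\sum_{k=0}^{n-2}\frac{(2)_k(2)_k(2-n)_k}{(1)_k(4-2n)_k}\frac{2^k}{k!}$ with $(a)_k=a(a+1)\cdots(a+k-1)$. Moreover $E_U(\Phi_n)\sim\frac{\sqrt{\pi}}{4}n^{5/2}$ as $n\to\infty$.
   Context: $\mathcal{BT}_n$ is the set of (isomorphism classes of) binary phylogenetic trees with leaves bijectively labeled by $\{1,\dots,n\}$ (rooted, every internal node with exactly two children); $|\mathcal{BT}_n|=(2n-3)!!$. For $T\in\mathcal{BT}_n$, $\Phi(T)=\sum_{1\le i<j\le n}\delta_T(LCA_T(i,j))$, where $\delta_T$ is depth (number of arcs from the root) and $LCA$ is lowest common ancestor. $\Phi_n$ is $\Phi(T)$ for random $T\in\mathcal{BT}_n$. The uniform model gives every tree in $\mathcal{BT}_n$ probability $1/(2n-3)!!$; $E_U$ is expectation under it. $m!!$ denotes the double factorial. *)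

theory Defs
  imports "HOL-Analysis.Analysis" "HOL-Library.Landau_Symbols"
begin

text \<open>Ordered trees; an isomorphism class of (unordered) binary phylogenetic trees
  is represented by its unique canonical form, in which at every internal node
  the left subtree contains the smallest leaf label of the node.\<close>

datatype ltree = Leaf nat | Node ltree ltree

fun leaves :: "ltree \<Rightarrow> nat list" where
  "leaves (Leaf i) = [i]"
| "leaves (Node l r) = leaves l @ leaves r"

fun canonical :: "ltree \<Rightarrow> bool" where
  "canonical (Leaf i) = True"
| "canonical (Node l r) =
     (canonical l \<and> canonical r \<and> Min (set (leaves l)) < Min (set (leaves r)))"

definition BT :: "nat \<Rightarrow> ltree set" where
  "BT n = {t. distinct (leaves t) \<and> set (leaves t) = {1..n} \<and> canonical t}"

fun lca_depth :: "ltree \<Rightarrow> nat \<Rightarrow> nat \<Rightarrow> nat" where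
  "lca_depth (Leaf k) i j = 0"
| "lca_depth (Node l r) i j =
     (if i \<in> set (leaves l) \<and> j \<in> set (leaves l) then Suc (lca_depth l i j)
      else if i \<in> set (leaves r) \<and> j \<in> set (leaves r) then Suc (lca_depth r i j)
      else 0)"

definition Phi :: "nat \<Rightarrow> ltree \<Rightarrow> real" where
  "Phi n t = (\<Sum>i\<in>{1..n}. \<Sum>j\<in>{i<..n}. real (lca_depth t i j))"

definition E_U_Phi :: "nat \<Rightarrow> real" where
  "E_U_Phi n = (\<Sum>t\<in>BT n. Phi n t) / real (card (BT n))"

fun dfact :: "nat \<Rightarrow> nat" where
  "dfact 0 = 1"
| "dfact (Suc 0) = 1"
| "dfact (Suc (Suc m)) = Suc (Suc m) * dfact m"

definition hyp3F2 :: "nat \<Rightarrow> real" where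
  "hyp3F2 n = (\<Sum>k=0..n-2.
      (pochhammer 2 k * pochhammer 2 k * pochhammer (2 - real n) k)
      / (pochhammer 1 k * pochhammer (4 - 2 * real n) k) * 2 ^ k / fact k)"

end

theory Submission
  imports Defs "HOL-Real_Asymp.Real_Asymp"
begin


abbreviation nl :: "ltree \<Rightarrow> nat" where "nl t \<equiv> length (leaves t)"

fun phi :: "ltree \<Rightarrow> real" where
  "phi (Leaf i) = 0"
| "phi (Node l r) = phi l + phi r + real (nl l) * (real (nl l) - 1) / 2 + real (nl r) * (real (nl r) - 1) / 2"

fun sack :: "ltree \<Rightarrow> real" where
  "sack (Leaf i) = 0"
| "sack (Node l r) = sack l + sack r + real (nl l) + real (nl r)"

fun ins :: "nat \<Rightarrow> ltree \<Rightarrow> ltree set" where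
  "ins x (Leaf i) = {Node (Leaf i) (Leaf x)}"
| "ins x (Node l r) = insert (Node (Node l r) (Leaf x))
      ((\<lambda>l'. Node l' r) ` ins x l \<union> (\<lambda>r'. Node l r') ` ins x r)"

fun rem :: "nat \<Rightarrow> ltree \<Rightarrow> ltree" where
  "rem x (Leaf i) = Leaf i"
| "rem x (Node l r) = (if r = Leaf x then l else if x \<in> set (leaves l) then Node (rem x l) r
      else Node l (rem x r))"

lemma nl_pos: "nl t \<ge> 1"
  by (induction t) auto

lemma leaves_ne: "leaves t \<noteq> []"
  by (induction t) auto

lemma finite_ins: "finite (ins x t)"
  by (induction t) auto

lemma ins_leaves: "t' \<in> ins x t \<Longrightarrow> set (leaves t') = insert x (set (leaves t)) \<and> nl t' = Suc (nl t)"
  by (induction t arbitrary: t') auto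

lemma ins_distinct: "t' \<in> ins x t \<Longrightarrow> distinct (leaves t) \<Longrightarrow> x \<notin> set (leaves t) \<Longrightarrow> distinct (leaves t')"
proof (induction t arbitrary: t')
  case (Leaf i) then show ?case by auto
next
  case (Node l r)
  then show ?case using ins_leaves by fastforce
qed

lemma Min_insert_big: "finite A \<Longrightarrow> A \<noteq> {} \<Longrightarrow> \<forall>y\<in>A. y < (x::nat) \<Longrightarrow> Min (insert x A) = Min A"
proof -
  assume a: "finite A" "A \<noteq> {}" "\<forall>y\<in>A. y < (x::nat)"
  have "Min A \<in> A" using a Min_in by blast
  then have "Min A < x" using a by blast
  then show ?thesis using Min_insert[OF a(1,2), of x] by simp
qed

lemma ins_canonical: "t' \<in> ins x t \<Longrightarrow> canonical t \<Longrightarrow> \<forall>y\<in>set (leaves t). y < x \<Longrightarrow> canonical t'"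
proof (induction t arbitrary: t')
  case (Leaf i) then show ?case by auto
next
  case (Node l r)
  have fl: "finite (set (leaves l))" "set (leaves l) \<noteq> {}" and fr: "finite (set (leaves r))" "set (leaves r) \<noteq> {}"
    using leaves_ne by auto
  have ml: "Min (set (leaves l)) < x" using Node.prems(3) Min_in[OF fl] by simp
  have mr: "Min (set (leaves r)) < x" using Node.prems(3) Min_in[OF fr] by simp
  from Node.prems(1) consider "t' = Node (Node l r) (Leaf x)" | l' where "l' \<in> ins x l" "t' = Node l' r"
    | r' where "r' \<in> ins x r" "t' = Node l r'" by auto
  then show ?case
  proof cases
    case 1
    have "Min (set (leaves l) \<union> set (leaves r)) \<le> Min (set (leaves l))" using fl fr by (simp add: Min_Un)
    then have "Min (set (leaves l) \<union> set (leaves r)) < x" using ml by linarith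
    then show ?thesis using 1 Node.prems(2) by simp
  next
    case 2
    have "set (leaves l') = insert x (set (leaves l))" using ins_leaves[OF 2(1)] by auto
    then have "Min (set (leaves l')) = Min (set (leaves l))" using Min_insert_big[OF fl] Node.prems(3) by auto
    moreover have "canonical l'" using Node.IH(1)[OF 2(1)] Node.prems(2,3) by simp
    ultimately show ?thesis using 2 Node.prems(2) by simp
  next
    case 3
    have "set (leaves r') = insert x (set (leaves r))" using ins_leaves[OF 3(1)] by auto
    then have "Min (set (leaves r')) = Min (set (leaves r))" using Min_insert_big[OF fr] Node.prems(3) by auto
    moreover have "canonical r'" using Node.IH(2)[OF 3(1)] Node.prems(2,3) by simp
    ultimately show ?thesis using 3 Node.prems(2) by simp
  qed
qed

lemma rem_ins: "t' \<in> ins x t \<Longrightarrow> x \<notin> set (leaves t) \<Longrightarrow> rem x t' = t"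
proof (induction t arbitrary: t')
  case (Leaf i) then show ?case by auto
next
  case (Node l r)
  from Node.prems(1) consider "t' = Node (Node l r) (Leaf x)" | l' where "l' \<in> ins x l" "t' = Node l' r"
    | r' where "r' \<in> ins x r" "t' = Node l r'" by auto
  then show ?case
  proof cases
    case 1 then show ?thesis by auto
  next
    case 2
    have "r \<noteq> Leaf x" using Node.prems by auto
    moreover have "x \<in> set (leaves l')" using ins_leaves[OF 2(1)] by auto
    ultimately show ?thesis using 2 Node by auto
  next
    case 3
    have "r' \<noteq> Leaf x" using ins_leaves[OF 3(1)] nl_pos[of r] by auto
    moreover have "x \<notin> set (leaves l)" using Node.prems by auto
    ultimately show ?thesis using 3 Node by auto
  qed
qed


lemma sum_ins_Node:
  assumes "x \<notin> set (leaves (Node l r))"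
  shows "(\<Sum>t'\<in>ins x (Node l r). f t') = f (Node (Node l r) (Leaf x))
     + (\<Sum>l'\<in>ins x l. f (Node l' r)) + (\<Sum>r'\<in>ins x r. f (Node l r'))"
proof -
  have xl: "x \<notin> set (leaves l)" and xr: "x \<notin> set (leaves r)" using assms by auto
  have n1: "Node (Node l r) (Leaf x) \<notin> (\<lambda>l'. Node l' r) ` ins x l"
  proof
    assume "Node (Node l r) (Leaf x) \<in> (\<lambda>l'. Node l' r) ` ins x l"
    then have "r = Leaf x" by auto
    then show False using xr by simp
  qed
  have n2: "Node (Node l r) (Leaf x) \<notin> (\<lambda>r'. Node l r') ` ins x r"
  proof
    assume "Node (Node l r) (Leaf x) \<in> (\<lambda>r'. Node l r') ` ins x r"
    then have "Node l r = l" by auto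
    then have "size (Node l r) = size l" by simp
    then show False by simp
  qed
  have d: "(\<lambda>l'. Node l' r) ` ins x l \<inter> (\<lambda>r'. Node l r') ` ins x r = {}"
  proof (rule ccontr)
    assume "\<not> ?thesis"
    then obtain l' where "l' \<in> ins x l" "Node l' r \<in> (\<lambda>r'. Node l r') ` ins x r" by blast
    then have "l' = l" "x \<in> set (leaves l')" using ins_leaves by auto
    then show False using xl by simp
  qed
  have i1: "inj_on (\<lambda>l'. Node l' r) (ins x l)" by (rule inj_onI) simp
  have i2: "inj_on (\<lambda>r'. Node l r') (ins x r)" by (rule inj_onI) simp
  have "(\<Sum>t'\<in>ins x (Node l r). f t') = f (Node (Node l r) (Leaf x))
     + (\<Sum>t'\<in>(\<lambda>l'. Node l' r) ` ins x l \<union> (\<lambda>r'. Node l r') ` ins x r. f t')"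
    using n1 n2 by (simp add: finite_ins)
  also have "(\<Sum>t'\<in>(\<lambda>l'. Node l' r) ` ins x l \<union> (\<lambda>r'. Node l r') ` ins x r. f t')
     = (\<Sum>t'\<in>(\<lambda>l'. Node l' r) ` ins x l. f t') + (\<Sum>t'\<in>(\<lambda>r'. Node l r') ` ins x r. f t')"
    using d by (simp add: finite_ins sum.union_disjoint)
  also have "(\<Sum>t'\<in>(\<lambda>l'. Node l' r) ` ins x l. f t') = (\<Sum>l'\<in>ins x l. f (Node l' r))"
    using i1 by (simp add: sum.reindex)
  also have "(\<Sum>t'\<in>(\<lambda>r'. Node l r') ` ins x r. f t') = (\<Sum>r'\<in>ins x r. f (Node l r'))"
    using i2 by (simp add: sum.reindex)
  finally show ?thesis by (simp add: add.assoc)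
qed

lemma card_ins: "x \<notin> set (leaves t) \<Longrightarrow> real (card (ins x t)) = 2 * real (nl t) - 1"
proof (induction t)
  case (Leaf i) then show ?case by simp
next
  case (Node l r)
  have "real (card (ins x (Node l r))) = (\<Sum>t'\<in>ins x (Node l r). 1)" by simp
  also have "\<dots> = 1 + real (card (ins x l)) + real (card (ins x r))"
    using sum_ins_Node[OF Node.prems, of "\<lambda>_. 1::real"] by simp
  finally show ?case using Node by simp
qed

lemma sum_ins_sack: "x \<notin> set (leaves t) \<Longrightarrow>
  (\<Sum>t'\<in>ins x t. sack t') = (2 * real (nl t) + 2) * sack t + real (nl t) + 1"
proof (induction t)
  case (Leaf i) then show ?case by simp
next
  case (Node l r)
  have xl: "x \<notin> set (leaves l)" and xr: "x \<notin> set (leaves r)" using Node.prems by auto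
  define a where "a = real (nl l)"
  define b where "b = real (nl r)"
  have e1: "(\<Sum>l'\<in>ins x l. sack (Node l' r)) = (\<Sum>l'\<in>ins x l. sack l') + real (card (ins x l)) * (sack r + a + 1 + b)"
  proof -
    have "(\<Sum>l'\<in>ins x l. sack (Node l' r)) = (\<Sum>l'\<in>ins x l. sack l' + (sack r + a + 1 + b))"
      by (rule sum.cong) (auto simp: a_def b_def dest: ins_leaves)
    then show ?thesis by (simp add: sum.distrib)
  qed
  have e2: "(\<Sum>r'\<in>ins x r. sack (Node l r')) = (\<Sum>r'\<in>ins x r. sack r') + real (card (ins x r)) * (sack l + a + b + 1)"
  proof -
    have "(\<Sum>r'\<in>ins x r. sack (Node l r')) = (\<Sum>r'\<in>ins x r. sack r' + (sack l + a + b + 1))"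
      by (rule sum.cong) (auto simp: a_def b_def dest: ins_leaves)
    then show ?thesis by (simp add: sum.distrib)
  qed
  show ?case
    unfolding sum_ins_Node[OF Node.prems] e1 e2 Node.IH(1)[OF xl] Node.IH(2)[OF xr] card_ins[OF xl] card_ins[OF xr]
    by (simp add: a_def[symmetric] b_def[symmetric] algebra_simps)
qed

lemma sum_ins_phi: "x \<notin> set (leaves t) \<Longrightarrow>
  (\<Sum>t'\<in>ins x t. phi t') = (2 * real (nl t) + 4) * phi t + real (nl t) * (real (nl t) - 1) / 2 + sack t"
proof (induction t)
  case (Leaf i) then show ?case by simp
next
  case (Node l r)
  have xl: "x \<notin> set (leaves l)" and xr: "x \<notin> set (leaves r)" using Node.prems by auto
  define a where "a = real (nl l)"
  define b where "b = real (nl r)"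
  have e1: "(\<Sum>l'\<in>ins x l. phi (Node l' r)) = (\<Sum>l'\<in>ins x l. phi l') + real (card (ins x l)) * (phi r + (a+1)*a/2 + b*(b-1)/2)"
  proof -
    have "(\<Sum>l'\<in>ins x l. phi (Node l' r)) = (\<Sum>l'\<in>ins x l. phi l' + (phi r + (a+1)*a/2 + b*(b-1)/2))"
      by (rule sum.cong) (auto simp: a_def b_def dest: ins_leaves)
    then show ?thesis by (simp add: sum.distrib)
  qed
  have e2: "(\<Sum>r'\<in>ins x r. phi (Node l r')) = (\<Sum>r'\<in>ins x r. phi r') + real (card (ins x r)) * (phi l + a*(a-1)/2 + (b+1)*b/2)"
  proof -
    have "(\<Sum>r'\<in>ins x r. phi (Node l r')) = (\<Sum>r'\<in>ins x r. phi r' + (phi l + a*(a-1)/2 + (b+1)*b/2))"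
      by (rule sum.cong) (auto simp: a_def b_def dest: ins_leaves)
    then show ?thesis by (simp add: sum.distrib)
  qed
  show ?case
    unfolding sum_ins_Node[OF Node.prems] e1 e2 Node.IH(1)[OF xl] Node.IH(2)[OF xr] card_ins[OF xl] card_ins[OF xr]
    by (simp add: a_def[symmetric] b_def[symmetric] field_simps)
qed


lemma Min_lt_of_two:
  assumes "distinct (leaves t)" "nl t \<ge> 2" "\<forall>y\<in>set (leaves t). y \<le> (x::nat)"
  shows "Min (set (leaves t)) < x"
proof -
  have c: "card (set (leaves t)) \<ge> 2" using assms distinct_card by metis
  have "\<exists>y\<in>set (leaves t). y \<noteq> x"
  proof (rule ccontr)
    assume "\<not> ?thesis"
    then have "set (leaves t) \<subseteq> {x}" by auto
    then have "card (set (leaves t)) \<le> 1" using card_mono[of "{x}"] by fastforce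
    then show False using c by simp
  qed
  then obtain y where y: "y \<in> set (leaves t)" "y \<noteq> x" by blast
  then have "y < x" using assms(3) by fastforce
  moreover have "Min (set (leaves t)) \<le> y" using y by simp
  ultimately show ?thesis by simp
qed

lemma Min_remove_big:
  assumes "finite A" "A \<noteq> {}" "Min A < (x::nat)"
  shows "Min (A - {x}) = Min A"
proof -
  have m: "Min A \<in> A - {x}" using assms Min_in by fastforce
  show ?thesis
  proof (rule Min_eqI)
    show "finite (A - {x})" using assms by simp
    show "\<And>y. y \<in> A - {x} \<Longrightarrow> Min A \<le> y" using assms by simp
    show "Min A \<in> A - {x}" by (rule m)
  qed
qed

lemma root_in_ins: "Node t (Leaf x) \<in> ins x t"
  by (cases t) auto

lemma rem_props:
  "distinct (leaves t) \<Longrightarrow> canonical t \<Longrightarrow> x \<in> set (leaves t) \<Longrightarrow> \<forall>y\<in>set (leaves t). y \<le> x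
   \<Longrightarrow> nl t \<ge> 2 \<Longrightarrow>
   t \<in> ins x (rem x t) \<and> set (leaves (rem x t)) = set (leaves t) - {x}
   \<and> distinct (leaves (rem x t)) \<and> canonical (rem x t)"
proof (induction t)
  case (Leaf i) then show ?case by simp
next
  case (Node l r)
  have fl: "finite (set (leaves l))" "set (leaves l) \<noteq> {}" and fr: "finite (set (leaves r))" "set (leaves r) \<noteq> {}"
    using leaves_ne by auto
  have dl: "distinct (leaves l)" and dr: "distinct (leaves r)" and dlr: "set (leaves l) \<inter> set (leaves r) = {}"
    using Node.prems(1) by auto
  have cl: "canonical l" and cr: "canonical r" and mlr: "Min (set (leaves l)) < Min (set (leaves r))"
    using Node.prems(2) by auto
  have mrx: "Min (set (leaves r)) \<le> x" using Node.prems(4) Min_in[OF fr] by simp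
  show ?case
  proof (cases "r = Leaf x")
    case True
    have "x \<notin> set (leaves l)" using True dlr by auto
    then show ?thesis using True dl cl root_in_ins[of l x] by auto
  next
    case rx: False
    show ?thesis
    proof (cases "x \<in> set (leaves l)")
      case True
      have "x \<notin> set (leaves r)" using True dlr by auto
      have "nl l \<ge> 2"
      proof (cases l)
        case (Leaf y)
        then have "Min (set (leaves l)) = x" using True by simp
        then show ?thesis using mlr mrx by simp
      next
        case (Node l1 l2)
        then show ?thesis using nl_pos[of l1] nl_pos[of l2] by simp
      qed
      then have IH: "l \<in> ins x (rem x l) \<and> set (leaves (rem x l)) = set (leaves l) - {x}
        \<and> distinct (leaves (rem x l)) \<and> canonical (rem x l)"
        using Node.IH(1) dl cl True Node.prems(4) by simp
      have "Min (set (leaves l)) < x" using mlr mrx by simp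
      then have mm: "Min (set (leaves (rem x l))) = Min (set (leaves l))"
        using IH Min_remove_big[OF fl] by simp
      have req: "rem x (Node l r) = Node (rem x l) r" using rx True by simp
      have "Node l r \<in> ins x (Node (rem x l) r)" using IH by simp
      moreover have "set (leaves (Node (rem x l) r)) = set (leaves (Node l r)) - {x}"
        using IH \<open>x \<notin> set (leaves r)\<close> by auto
      moreover have "distinct (leaves (Node (rem x l) r))" using IH dr dlr by auto
      moreover have "canonical (Node (rem x l) r)" using IH cr mm mlr by simp
      ultimately show ?thesis unfolding req by blast
    next
      case False
      have xr: "x \<in> set (leaves r)" using False Node.prems(3) by simp
      have "nl r \<ge> 2"
      proof (cases r)
        case (Leaf y)
        then show ?thesis using xr rx by simp
      next
        case (Node r1 r2)
        then show ?thesis using nl_pos[of r1] nl_pos[of r2] by simp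
      qed
      then have IH: "r \<in> ins x (rem x r) \<and> set (leaves (rem x r)) = set (leaves r) - {x}
        \<and> distinct (leaves (rem x r)) \<and> canonical (rem x r)"
        using Node.IH(2) dr cr xr Node.prems(4) by simp
      have "Min (set (leaves r)) < x" using Min_lt_of_two[OF dr \<open>nl r \<ge> 2\<close>] Node.prems(4) by simp
      then have mm: "Min (set (leaves (rem x r))) = Min (set (leaves r))"
        using IH Min_remove_big[OF fr] by simp
      have req: "rem x (Node l r) = Node l (rem x r)" using rx False by simp
      have "Node l r \<in> ins x (Node l (rem x r))" using IH by simp
      moreover have "set (leaves (Node l (rem x r))) = set (leaves (Node l r)) - {x}"
        using IH False by auto
      moreover have "distinct (leaves (Node l (rem x r)))" using IH dl dlr by auto
      moreover have "canonical (Node l (rem x r))" using IH cl mm mlr by simp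
      ultimately show ?thesis unfolding req by blast
    qed
  qed
qed

lemma BT_nl: "t \<in> BT n \<Longrightarrow> nl t = n"
proof -
  assume "t \<in> BT n"
  then have "distinct (leaves t)" "set (leaves t) = {1..n}" by (auto simp: BT_def)
  then show ?thesis using distinct_card[of "leaves t"] by simp
qed

lemma BT_0: "BT 0 = {}"
  unfolding BT_def using leaves_ne by auto

lemma BT_1: "BT 1 = {Leaf 1}"
proof
  show "{Leaf 1} \<subseteq> BT 1" by (simp add: BT_def)
  show "BT 1 \<subseteq> {Leaf 1}"
  proof
    fix t assume t: "t \<in> BT 1"
    then have "nl t = 1" by (rule BT_nl)
    moreover have s1: "set (leaves t) = {1}" using t by (simp add: BT_def)
    ultimately show "t \<in> {Leaf 1}"
    proof (cases t)
      case (Leaf i) then show ?thesis using s1 by simp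
    next
      case (Node l r) then have "nl t \<ge> 2" using nl_pos[of l] nl_pos[of r] by simp
      then show ?thesis using \<open>nl t = 1\<close> by simp
    qed
  qed
qed

lemma BT_Suc: assumes "n \<ge> 1" shows "BT (Suc n) = (\<Union>t\<in>BT n. ins (Suc n) t)"
proof
  show "(\<Union>t\<in>BT n. ins (Suc n) t) \<subseteq> BT (Suc n)"
  proof
    fix t' assume "t' \<in> (\<Union>t\<in>BT n. ins (Suc n) t)"
    then obtain t where t: "t \<in> BT n" "t' \<in> ins (Suc n) t" by blast
    have L: "set (leaves t) = {1..n}" "distinct (leaves t)" "canonical t" using t(1) by (auto simp: BT_def)
    have "set (leaves t') = {1..Suc n}" using ins_leaves[OF t(2)] L by auto
    moreover have "distinct (leaves t')" using ins_distinct[OF t(2)] L by auto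
    moreover have "canonical t'" using ins_canonical[OF t(2)] L by auto
    ultimately show "t' \<in> BT (Suc n)" by (simp add: BT_def)
  qed
  show "BT (Suc n) \<subseteq> (\<Union>t\<in>BT n. ins (Suc n) t)"
  proof
    fix t' assume t': "t' \<in> BT (Suc n)"
    have L: "set (leaves t') = {1..Suc n}" "distinct (leaves t')" "canonical t'" using t' by (auto simp: BT_def)
    have "nl t' \<ge> 2" using BT_nl[OF t'] assms by simp
    then have R: "t' \<in> ins (Suc n) (rem (Suc n) t') \<and> set (leaves (rem (Suc n) t')) = set (leaves t') - {Suc n}
      \<and> distinct (leaves (rem (Suc n) t')) \<and> canonical (rem (Suc n) t')"
      using rem_props[OF L(2,3)] L(1) by simp
    have "set (leaves t') - {Suc n} = {1..n}" using L(1) by auto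
    then have "rem (Suc n) t' \<in> BT n" using R by (simp add: BT_def)
    then show "t' \<in> (\<Union>t\<in>BT n. ins (Suc n) t)" using R by blast
  qed
qed

lemma finite_BT: "finite (BT n)"
proof (induction n)
  case 0 then show ?case by (simp add: BT_0)
next
  case (Suc n)
  show ?case
  proof (cases "n = 0")
    case True then show ?thesis using BT_1 by simp
  next
    case False then show ?thesis using BT_Suc[of n] Suc finite_ins by simp
  qed
qed

lemma sum_BT_Suc:
  assumes "n \<ge> 1"
  shows "(\<Sum>t\<in>BT (Suc n). f t) = (\<Sum>t\<in>BT n. \<Sum>t'\<in>ins (Suc n) t. f t')"
proof -
  have "\<forall>i\<in>BT n. \<forall>j\<in>BT n. i \<noteq> j \<longrightarrow> ins (Suc n) i \<inter> ins (Suc n) j = {}"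
  proof (intro ballI impI)
    fix i j assume ij: "i \<in> BT n" "j \<in> BT n" "i \<noteq> j"
    have "Suc n \<notin> set (leaves i)" "Suc n \<notin> set (leaves j)" using ij by (auto simp: BT_def)
    then show "ins (Suc n) i \<inter> ins (Suc n) j = {}" using rem_ins ij(3) by blast
  qed
  then show ?thesis unfolding BT_Suc[OF assms]
    by (intro sum.UNION_disjoint finite_BT) (auto simp: finite_ins)
qed


definition PP :: "nat set \<Rightarrow> (nat \<times> nat) set" where
  "PP A = {(i,j). i \<in> A \<and> j \<in> A \<and> i < j}"

lemma PP_sub: "PP A \<subseteq> A \<times> A" by (auto simp: PP_def)

lemma finite_PP: "finite A \<Longrightarrow> finite (PP A)"
  using PP_sub finite_subset by blast

lemma card_PP: assumes "finite A" shows "real (card (PP A)) = real (card A) * (real (card A) - 1) / 2"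
proof -
  let ?sw = "\<lambda>(i,j). (j,i)"
  have eq: "A \<times> A = PP A \<union> ?sw ` PP A \<union> (\<lambda>i. (i,i)) ` A"
    by (auto simp: PP_def image_iff)
  have i1: "inj_on ?sw (PP A)" by (auto simp: inj_on_def)
  have i2: "inj_on (\<lambda>i. (i,i)) A" by (auto simp: inj_on_def)
  have d1: "PP A \<inter> ?sw ` PP A = {}" by (auto simp: PP_def)
  have d2: "(PP A \<union> ?sw ` PP A) \<inter> (\<lambda>i. (i,i)) ` A = {}" by (auto simp: PP_def)
  have f: "finite (PP A)" using finite_PP[OF assms] .
  have "card (A \<times> A) = card (PP A \<union> ?sw ` PP A) + card ((\<lambda>i. (i,i)) ` A)"
    unfolding eq using d2 f assms by (intro card_Un_disjoint) auto
  also have "card (PP A \<union> ?sw ` PP A) = card (PP A) + card (?sw ` PP A)"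
    using d1 f by (intro card_Un_disjoint) auto
  also have "card (?sw ` PP A) = card (PP A)" using card_image[OF i1] .
  also have "card ((\<lambda>i. (i,i)) ` A) = card A" using card_image[OF i2] .
  finally have "card A * card A = 2 * card (PP A) + card A" by (simp add: card_cartesian_product)
  then have "real (card A) * real (card A) = 2 * real (card (PP A)) + real (card A)"
    by (metis (mono_tags) of_nat_add of_nat_mult of_nat_numeral)
  then show ?thesis by (simp add: field_simps)
qed

lemma lca_sum: "distinct (leaves t) \<Longrightarrow>
  (\<Sum>(i,j)\<in>PP (set (leaves t)). real (lca_depth t i j)) = phi t"
proof (induction t)
  case (Leaf k)
  have "PP {k} = {}" by (auto simp: PP_def)
  then show ?case by simp
next
  case (Node l r)
  define A where "A = set (leaves l)"
  define B where "B = set (leaves r)"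
  have dl: "distinct (leaves l)" and dr: "distinct (leaves r)" and AB: "A \<inter> B = {}"
    using Node.prems by (auto simp: A_def B_def)
  have fA: "finite A" and fB: "finite B" by (auto simp: A_def B_def)
  have U: "set (leaves (Node l r)) = A \<union> B" by (simp add: A_def B_def)
  let ?f = "\<lambda>(i,j). real (lca_depth (Node l r) i j)"
  have fU: "finite (PP (A \<union> B))" using finite_PP fA fB by simp
  have s1: "PP A \<subseteq> PP (A \<union> B)" by (auto simp: PP_def)
  have s2: "PP B \<subseteq> PP (A \<union> B) - PP A" using AB by (auto simp: PP_def)
  have "sum ?f (PP (A \<union> B)) = sum ?f (PP (A \<union> B) - PP A) + sum ?f (PP A)"
    by (rule sum.subset_diff[OF s1 fU])
  also have "sum ?f (PP (A \<union> B) - PP A) = sum ?f (PP (A \<union> B) - PP A - PP B) + sum ?f (PP B)"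
    by (rule sum.subset_diff[OF s2]) (use fU in simp)
  also have "sum ?f (PP (A \<union> B) - PP A - PP B) = 0"
    by (rule sum.neutral) (use AB in \<open>auto simp: PP_def A_def B_def\<close>)
  also have "sum ?f (PP A) = (\<Sum>(i,j)\<in>PP A. real (lca_depth l i j) + 1)"
    by (rule sum.cong) (auto simp: PP_def A_def)
  also have "\<dots> = phi l + real (card (PP A))"
    using Node.IH(1)[OF dl] by (simp add: sum.distrib split_def A_def)
  also have "sum ?f (PP B) = (\<Sum>(i,j)\<in>PP B. real (lca_depth r i j) + 1)"
    using AB by (intro sum.cong) (auto simp: PP_def A_def B_def)
  also have "\<dots> = phi r + real (card (PP B))"
    using Node.IH(2)[OF dr] by (simp add: sum.distrib split_def B_def)
  finally have "sum ?f (PP (A \<union> B)) = phi l + real (card (PP A)) + (phi r + real (card (PP B)))" by simp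
  moreover have "real (card A) = real (nl l)" "real (card B) = real (nl r)"
    using dl dr distinct_card by (auto simp: A_def B_def)
  ultimately show ?case unfolding U using card_PP[OF fA] card_PP[OF fB] by simp
qed

lemma Phi_phi: assumes "t \<in> BT n" shows "Phi n t = phi t"
proof -
  have L: "set (leaves t) = {1..n}" "distinct (leaves t)" using assms by (auto simp: BT_def)
  have "Sigma {1..n} (\<lambda>i. {i<..n}) = PP {1..n}" by (auto simp: PP_def)
  then have "Phi n t = (\<Sum>(i,j)\<in>PP {1..n}. real (lca_depth t i j))"
    unfolding Phi_def by (subst sum.Sigma) auto
  then show ?thesis using lca_sum[OF L(2)] L(1) by simp
qed


lemma dfact_even: "n \<ge> 1 \<Longrightarrow> real (dfact (2 * n)) = 2 * real n * real (dfact (2 * n - 2))"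
proof -
  assume "n \<ge> 1"
  then obtain k where k: "n = Suc k" by (cases n) auto
  have "2 * n = Suc (Suc (2 * k))" "2 * n - 2 = 2 * k" using k by auto
  then show ?thesis using k by (simp add: algebra_simps)
qed

lemma BT_1': "BT (Suc 0) = {Leaf 1}" using BT_1 by simp

lemma dfact_odd: "n \<ge> 1 \<Longrightarrow> real (dfact (2 * n - 1)) = (2 * real n - 1) * real (dfact (2 * n - 3))"
proof -
  assume n: "n \<ge> 1"
  show ?thesis
  proof (cases "n = 1")
    case True then show ?thesis by simp
  next
    case False
    define k where "k = n - 2"
    have k: "n = Suc (Suc k)" using n False unfolding k_def by arith
    have "2 * n - 1 = Suc (Suc (2 * k + 1))" "2 * n - 3 = 2 * k + 1" using k by auto
    then show ?thesis using k by (simp add: algebra_simps)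
  qed
qed

lemma BT_notin: "t \<in> BT n \<Longrightarrow> Suc n \<notin> set (leaves t)"
  by (auto simp: BT_def)

lemma card_BT: "n \<ge> 1 \<Longrightarrow> real (card (BT n)) = real (dfact (2 * n - 3))"
proof (induction n rule: nat_induct_at_least)
  case base then show ?case by (simp add: BT_1')
next
  case (Suc n)
  have "real (card (BT (Suc n))) = (\<Sum>t\<in>BT (Suc n). 1)" by simp
  also have "\<dots> = (\<Sum>t\<in>BT n. real (card (ins (Suc n) t)))"
    using sum_BT_Suc[OF Suc.hyps, of "\<lambda>_. 1::real"] by simp
  also have "\<dots> = (\<Sum>t\<in>BT n. 2 * real n - 1)"
    by (rule sum.cong) (auto simp: card_ins BT_notin BT_nl)
  also have "\<dots> = (2 * real n - 1) * real (card (BT n))" by simp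
  also have "\<dots> = real (dfact (2 * Suc n - 3))"
    using Suc.IH dfact_odd[OF Suc.hyps] by (simp add: numeral_3_eq_3)
  finally show ?case .
qed

lemma sack_BT: "n \<ge> 1 \<Longrightarrow> (\<Sum>t\<in>BT n. sack t) = real n * (real (dfact (2 * n - 2)) - real (dfact (2 * n - 3)))"
proof (induction n rule: nat_induct_at_least)
  case base then show ?case by (simp add: BT_1')
next
  case (Suc n)
  have "(\<Sum>t\<in>BT (Suc n). sack t) = (\<Sum>t\<in>BT n. \<Sum>t'\<in>ins (Suc n) t. sack t')"
    by (rule sum_BT_Suc[OF Suc.hyps])
  also have "\<dots> = (\<Sum>t\<in>BT n. (2 * real n + 2) * sack t + (real n + 1))"
    by (rule sum.cong) (auto simp: sum_ins_sack BT_notin BT_nl)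
  also have "\<dots> = (2 * real n + 2) * (\<Sum>t\<in>BT n. sack t) + (real n + 1) * real (card (BT n))"
    by (simp add: sum.distrib sum_distrib_left)
  also have "\<dots> = real (Suc n) * (real (dfact (2 * Suc n - 2)) - real (dfact (2 * Suc n - 3)))"
  proof -
    have a: "2 * Suc n - 2 = 2 * n" "2 * Suc n - 3 = 2 * n - 1" by auto
    show ?thesis unfolding a dfact_even[OF Suc.hyps] dfact_odd[OF Suc.hyps] Suc.IH card_BT[OF Suc.hyps]
      by (simp add: algebra_simps)
  qed
  finally show ?case .
qed

lemma phi_BT: "n \<ge> 1 \<Longrightarrow> (\<Sum>t\<in>BT n. phi t) =
   real n * (real n - 1) / 2 * (real (dfact (2 * n - 2)) / 2 - real (dfact (2 * n - 3)))"
proof (induction n rule: nat_induct_at_least)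
  case base then show ?case by (simp add: BT_1')
next
  case (Suc n)
  have "(\<Sum>t\<in>BT (Suc n). phi t) = (\<Sum>t\<in>BT n. \<Sum>t'\<in>ins (Suc n) t. phi t')"
    by (rule sum_BT_Suc[OF Suc.hyps])
  also have "\<dots> = (\<Sum>t\<in>BT n. (2 * real n + 4) * phi t + real n * (real n - 1) / 2 + sack t)"
    by (rule sum.cong) (auto simp: sum_ins_phi BT_notin BT_nl)
  also have "\<dots> = (2 * real n + 4) * (\<Sum>t\<in>BT n. phi t) + real n * (real n - 1) / 2 * real (card (BT n))
     + (\<Sum>t\<in>BT n. sack t)"
    by (simp add: sum.distrib sum_distrib_left)
  also have "\<dots> = real (Suc n) * (real (Suc n) - 1) / 2 * (real (dfact (2 * Suc n - 2)) / 2 - real (dfact (2 * Suc n - 3)))"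
  proof -
    have a: "2 * Suc n - 2 = 2 * n" "2 * Suc n - 3 = 2 * n - 1" by auto
    show ?thesis unfolding a dfact_even[OF Suc.hyps] dfact_odd[OF Suc.hyps] Suc.IH card_BT[OF Suc.hyps]
      sack_BT[OF Suc.hyps]
      by (simp add: field_simps)
  qed
  finally show ?case .
qed

lemma dfact_pos: "dfact n > 0"
  by (induction n rule: dfact.induct) auto

lemma E_closed: "n \<ge> 1 \<Longrightarrow> E_U_Phi n =
   real n * (real n - 1) / 2 * (real (dfact (2 * n - 2)) / (2 * real (dfact (2 * n - 3))) - 1)"
proof -
  assume n: "n \<ge> 1"
  have "(\<Sum>t\<in>BT n. Phi n t) = (\<Sum>t\<in>BT n. phi t)" by (rule sum.cong) (auto simp: Phi_phi)
  then have "E_U_Phi n = (\<Sum>t\<in>BT n. phi t) / real (card (BT n))" by (simp add: E_U_Phi_def)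
  also have "\<dots> = real n * (real n - 1) / 2 * (real (dfact (2 * n - 2)) / 2 - real (dfact (2 * n - 3)))
       / real (dfact (2 * n - 3))" by (simp only: phi_BT[OF n] card_BT[OF n])
  also have "\<dots> = real n * (real n - 1) / 2 * (real (dfact (2 * n - 2)) / (2 * real (dfact (2 * n - 3))) - 1)"
    using dfact_pos[of "2*n-3"] by (simp add: field_simps)
  finally show ?thesis .
qed


definition ca :: "nat \<Rightarrow> nat \<Rightarrow> real" where
  "ca m k = real (k+1) * 2^k * real ((2*m-k) choose m)"
definition h1 :: "nat \<Rightarrow> nat \<Rightarrow> real" where
  "h1 m k = real k * real (k+1) * 2^k * real ((2*m+1-k) choose m)"
definition cb :: "nat \<Rightarrow> nat \<Rightarrow> real" where
  "cb m k = real (k+1) * real (k+2) / 2 * 2^k * real ((2*m-k) choose m)"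
definition h2 :: "nat \<Rightarrow> nat \<Rightarrow> real" where
  "h2 m k = real k * real (k+1) * real (k+2) / 2 * 2^k * real ((2*m+1-k) choose m)"

lemma binrels:
  assumes "R \<le> N"
  shows "real ((N+1) choose R) = real (N+1) * real (N choose R) / real (N+1-R)"
    and "real ((N+2) choose (R+1)) = real (N+2) * real ((N+1) choose R) / real (R+1)"
proof -
  have "(N+1-R) * ((N+1) choose R) = (N+1) * (N choose R)"
    using binomial_absorb_comp[of "N+1" R] by simp
  then have "real (N+1-R) * real ((N+1) choose R) = real (N+1) * real (N choose R)"
    by (metis of_nat_mult)
  moreover have "N+1-R > 0" using assms by simp
  ultimately show "real ((N+1) choose R) = real (N+1) * real (N choose R) / real (N+1-R)"
    by (simp add: field_simps)
  have "Suc R * ((N+2) choose Suc R) = (N+2) * ((N+1) choose R)"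
    using binomial_absorption[of R "N+2"] by simp
  then have "real (R+1) * real ((N+2) choose (R+1)) = real (N+2) * real ((N+1) choose R)"
    by (metis Suc_eq_plus1 of_nat_mult)
  then show "real ((N+2) choose (R+1)) = real (N+2) * real ((N+1) choose R) / real (R+1)"
    by (simp add: field_simps)
qed

lemma cert1:
  assumes m: "m \<ge> 1" and k: "k \<le> m + 1"
  shows "real (m+1) * ca (Suc m) k - 2 * (2 * real m + 3) * ca m k = h1 m k - h1 m (Suc k)"
proof (cases "k \<le> m")
  case False
  then have k: "k = Suc m" using k by simp
  have a: "2 * Suc m - Suc m = Suc m" "2 * m + 1 - Suc m = m" by auto
  have b: "(2 * m - Suc m) choose m = 0" "(2 * m + 1 - Suc (Suc m)) choose m = 0" using m by auto
  show ?thesis unfolding k ca_def h1_def a b by (simp add: algebra_simps)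
next
  case True
  then obtain j where j: "m = k + j" using le_Suc_ex by blast
  define N where "N = k + 2*j"
  define R where "R = k + j"
  have RN: "R \<le> N" by (simp add: N_def R_def)
  have e7: "N + 1 - R = j + 1" by (auto simp: N_def R_def j)
  have x1: "(2 * Suc m - k) choose Suc m = (N+2) choose (R+1)"
    by (rule arg_cong2[where f="(choose)"]) (auto simp: N_def R_def j)
  have x2: "(2 * m - k) choose m = N choose R"
    by (rule arg_cong2[where f="(choose)"]) (auto simp: N_def R_def j)
  have x3: "(2 * m + 1 - k) choose m = (N+1) choose R"
    by (rule arg_cong2[where f="(choose)"]) (auto simp: N_def R_def j)
  have x4: "(2 * m + 1 - Suc k) choose m = N choose R"
    by (rule arg_cong2[where f="(choose)"]) (auto simp: N_def R_def j)
  have mv: "real m = real k + real j" using j by simp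
  define B where "B = real (N choose R)"
  define J where "J = real (j+1)"
  define K where "K = real (R+1)"
  have JK: "J \<noteq> 0" "K \<noteq> 0" by (simp_all add: J_def K_def)
  have Jv: "J = real j + 1" and Kv: "K = real k + real j + 1" by (simp_all add: J_def K_def R_def)
  have c1: "real ((N+1) choose R) = real (N+1) * B / J" using binrels(1)[OF RN] unfolding e7 B_def J_def .
  have c2: "real ((N+2) choose (R+1)) = real (N+2) * (real (N+1) * B / J) / K"
    using binrels(2)[OF RN] c1 by (simp add: K_def)
  have Rv: "real R = real k + real j" and Nv: "real N = real k + 2 * real j" by (simp_all add: R_def N_def)
  show ?thesis
    unfolding ca_def h1_def x1 x2 x3 x4 c1 c2 B_def[symmetric]
    apply (simp add: JK field_simps)
    apply (simp add: Jv Kv Nv mv algebra_simps)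
    done
qed

lemma cert2:
  assumes m: "m \<ge> 1" and k: "k \<le> m + 1"
  shows "real (m+1) * cb (Suc m) k - 4 * (real m + 2) * cb m k = h2 m k - h2 m (Suc k)"
proof (cases "k \<le> m")
  case False
  then have k: "k = Suc m" using k by simp
  have a: "2 * Suc m - Suc m = Suc m" "2 * m + 1 - Suc m = m" by auto
  have b: "(2 * m - Suc m) choose m = 0" "(2 * m + 1 - Suc (Suc m)) choose m = 0" using m by auto
  show ?thesis unfolding k cb_def h2_def a b by (simp add: algebra_simps)
next
  case True
  then obtain j where j: "m = k + j" using le_Suc_ex by blast
  define N where "N = k + 2*j"
  define R where "R = k + j"
  have RN: "R \<le> N" by (simp add: N_def R_def)
  have e7: "N + 1 - R = j + 1" by (auto simp: N_def R_def j)
  have x1: "(2 * Suc m - k) choose Suc m = (N+2) choose (R+1)"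
    by (rule arg_cong2[where f="(choose)"]) (auto simp: N_def R_def j)
  have x2: "(2 * m - k) choose m = N choose R"
    by (rule arg_cong2[where f="(choose)"]) (auto simp: N_def R_def j)
  have x3: "(2 * m + 1 - k) choose m = (N+1) choose R"
    by (rule arg_cong2[where f="(choose)"]) (auto simp: N_def R_def j)
  have x4: "(2 * m + 1 - Suc k) choose m = N choose R"
    by (rule arg_cong2[where f="(choose)"]) (auto simp: N_def R_def j)
  have mv: "real m = real k + real j" using j by simp
  define B where "B = real (N choose R)"
  define J where "J = real (j+1)"
  define K where "K = real (R+1)"
  have JK: "J \<noteq> 0" "K \<noteq> 0" by (simp_all add: J_def K_def)
  have Jv: "J = real j + 1" and Kv: "K = real k + real j + 1" by (simp_all add: J_def K_def R_def)
  have c1: "real ((N+1) choose R) = real (N+1) * B / J" using binrels(1)[OF RN] unfolding e7 B_def J_def .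
  have c2: "real ((N+2) choose (R+1)) = real (N+2) * (real (N+1) * B / J) / K"
    using binrels(2)[OF RN] c1 by (simp add: K_def)
  have Rv: "real R = real k + real j" and Nv: "real N = real k + 2 * real j" by (simp_all add: R_def N_def)
  show ?thesis
    unfolding cb_def h2_def x1 x2 x3 x4 c1 c2 B_def[symmetric]
    apply (simp add: JK field_simps)
    apply (simp add: Jv Kv Nv mv algebra_simps)
    done
qed


lemma h1_end: "m \<ge> 1 \<Longrightarrow> h1 m (m+2) = 0"
proof -
  assume "m \<ge> 1"
  then have "(2*m+1-(m+2)) choose m = 0" by simp
  then show ?thesis by (simp add: h1_def)
qed

lemma h2_end: "m \<ge> 1 \<Longrightarrow> h2 m (m+2) = 0"
proof -
  assume "m \<ge> 1"
  then have "(2*m+1-(m+2)) choose m = 0" by simp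
  then show ?thesis by (simp add: h2_def)
qed

lemma ca_end: "m \<ge> 1 \<Longrightarrow> ca m (Suc m) = 0"
proof -
  assume "m \<ge> 1"
  then have "(2*m-Suc m) choose m = 0" by simp
  then show ?thesis by (simp add: ca_def)
qed

lemma cb_end: "m \<ge> 1 \<Longrightarrow> cb m (Suc m) = 0"
proof -
  assume "m \<ge> 1"
  then have "(2*m-Suc m) choose m = 0" by simp
  then show ?thesis by (simp add: cb_def)
qed

lemma A1_rec:
  assumes m: "m \<ge> 1"
  shows "real (m+1) * (\<Sum>k<Suc (Suc m). ca (Suc m) k) = 2 * (2 * real m + 3) * (\<Sum>k<Suc m. ca m k)"
proof -
  have "(\<Sum>k<m+2. real (m+1) * ca (Suc m) k - 2 * (2 * real m + 3) * ca m k) = (\<Sum>k<m+2. h1 m k - h1 m (Suc k))"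
    by (rule sum.cong[OF refl]) (rule cert1[OF m], simp)
  also have "\<dots> = h1 m 0 - h1 m (m+2)" by (rule sum_lessThan_telescope')
  also have "\<dots> = 0" using h1_end[OF m] by (simp add: h1_def)
  finally have "(\<Sum>k<m+2. real (m+1) * ca (Suc m) k) - (\<Sum>k<m+2. 2 * (2 * real m + 3) * ca m k) = 0"
    by (simp only: sum_subtractf)
  then have "real (m+1) * (\<Sum>k<m+2. ca (Suc m) k) - 2 * (2 * real m + 3) * (\<Sum>k<m+2. ca m k) = 0"
    by (simp only: sum_distrib_left)
  then have "real (m+1) * (\<Sum>k<m+2. ca (Suc m) k) = 2 * (2 * real m + 3) * (\<Sum>k<m+2. ca m k)"
    by linarith
  moreover have "(\<Sum>k<m+2. ca m k) = (\<Sum>k<Suc m. ca m k)" using ca_end[OF m] by simp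
  moreover have "m + 2 = Suc (Suc m)" by simp
  ultimately show ?thesis by metis
qed

lemma A2_rec:
  assumes m: "m \<ge> 1"
  shows "real (m+1) * (\<Sum>k<Suc (Suc m). cb (Suc m) k) = 4 * (real m + 2) * (\<Sum>k<Suc m. cb m k)"
proof -
  have "(\<Sum>k<m+2. real (m+1) * cb (Suc m) k - 4 * (real m + 2) * cb m k) = (\<Sum>k<m+2. h2 m k - h2 m (Suc k))"
    by (rule sum.cong[OF refl]) (rule cert2[OF m], simp)
  also have "\<dots> = h2 m 0 - h2 m (m+2)" by (rule sum_lessThan_telescope')
  also have "\<dots> = 0" using h2_end[OF m] by (simp add: h2_def)
  finally have "(\<Sum>k<m+2. real (m+1) * cb (Suc m) k) - (\<Sum>k<m+2. 4 * (real m + 2) * cb m k) = 0"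
    by (simp only: sum_subtractf)
  then have "real (m+1) * (\<Sum>k<m+2. cb (Suc m) k) - 4 * (real m + 2) * (\<Sum>k<m+2. cb m k) = 0"
    by (simp only: sum_distrib_left)
  then have "real (m+1) * (\<Sum>k<m+2. cb (Suc m) k) = 4 * (real m + 2) * (\<Sum>k<m+2. cb m k)"
    by linarith
  moreover have "(\<Sum>k<m+2. cb m k) = (\<Sum>k<Suc m. cb m k)" using cb_end[OF m] by simp
  moreover have "m + 2 = Suc (Suc m)" by simp
  ultimately show ?thesis by metis
qed

lemma central_rec: "real ((2 * Suc m) choose Suc m) * real (m+1) = 2 * (2 * real m + 1) * real ((2*m) choose m)"
proof -
  have a: "Suc m * (Suc (2*m+1) choose Suc m) = Suc (2*m+1) * ((2*m+1) choose m)"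
    by (rule Suc_times_binomial)
  have b: "(2*m+1 - m) * ((2*m+1) choose m) = (2*m+1) * ((2*m+1-1) choose m)"
    by (rule binomial_absorb_comp)
  have b': "(m+1) * ((2*m+1) choose m) = (2*m+1) * ((2*m) choose m)"
    using b by (simp add: Suc_diff_le)
  define X where "X = real ((2 * Suc m) choose Suc m)"
  define Y where "Y = real ((2*m+1) choose m)"
  define Z where "Z = real ((2*m) choose m)"
  have "2 * Suc m = Suc (2*m+1)" by simp
  then have e1: "real (Suc m) * X = real (Suc (2*m+1)) * Y"
    unfolding X_def Y_def using a by (metis of_nat_mult)
  have e2: "real (m+1) * Y = real (2*m+1) * Z"
    unfolding Y_def Z_def using b' by (metis of_nat_mult)
  have "X * real (m+1) = 2 * (real (m+1) * Y)" using e1 by (simp add: algebra_simps)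
  also have "\<dots> = 2 * (2 * real m + 1) * Z" using e2 by simp
  finally show ?thesis unfolding X_def Z_def .
qed

lemma A1_closed: "(\<Sum>k<Suc m. ca m k) = (2 * real m + 1) * real ((2*m) choose m)"
proof (induction m)
  case 0 then show ?case by (simp add: ca_def)
next
  case (Suc m)
  show ?case
  proof (cases "m = 0")
    case True
    then show ?thesis by (simp add: ca_def numeral_2_eq_2)
  next
    case False
    then have m: "m \<ge> 1" by simp
    define X where "X = real ((2 * Suc m) choose Suc m)"
    define Z where "Z = real ((2*m) choose m)"
    have cr: "X * real (m+1) = 2 * (2 * real m + 1) * Z" unfolding X_def Z_def by (rule central_rec)
    have "real (m+1) * (\<Sum>k<Suc (Suc m). ca (Suc m) k) = 2 * (2 * real m + 3) * ((2 * real m + 1) * Z)"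
      unfolding Z_def by (simp only: A1_rec[OF m] Suc.IH)
    also have "\<dots> = (2 * real m + 3) * (2 * (2 * real m + 1) * Z)" by (simp add: algebra_simps)
    also have "\<dots> = (2 * real m + 3) * (X * real (m+1))" by (simp only: cr)
    also have "\<dots> = real (m+1) * ((2 * real (Suc m) + 1) * X)" by (simp add: algebra_simps)
    finally have fin: "real (m+1) * (\<Sum>k<Suc (Suc m). ca (Suc m) k) = real (m+1) * ((2 * real (Suc m) + 1) * X)" .
    have c0: "real (m+1) \<noteq> 0" by simp
    show ?thesis using fin by (simp only: mult_left_cancel[OF c0] X_def)
  qed
qed

lemma A2_closed: "(\<Sum>k<Suc m. cb m k) = (real m + 1) * 4 ^ m"
proof (induction m)
  case 0 then show ?case by (simp add: cb_def)
next
  case (Suc m)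
  show ?case
  proof (cases "m = 0")
    case True
    then show ?thesis by (simp add: cb_def numeral_2_eq_2)
  next
    case False
    then have m: "m \<ge> 1" by simp
    have "real (m+1) * (\<Sum>k<Suc (Suc m). cb (Suc m) k) = real (m+1) * ((real (Suc m) + 1) * 4 ^ Suc m)"
      unfolding A2_rec[OF m] Suc.IH by (simp add: algebra_simps)
    then show ?thesis by simp
  qed
qed

lemma f_closed: "(\<Sum>k<Suc m. real (k+1)^2 * 2^k * real ((2*m-k) choose m))
   = 2 * (real m + 1) * 4^m - (2 * real m + 1) * real ((2*m) choose m)"
proof -
  have "(\<Sum>k<Suc m. real (k+1)^2 * 2^k * real ((2*m-k) choose m)) = (\<Sum>k<Suc m. 2 * cb m k - ca m k)"
    by (rule sum.cong) (auto simp: ca_def cb_def power2_eq_square algebra_simps)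
  also have "\<dots> = 2 * (\<Sum>k<Suc m. cb m k) - (\<Sum>k<Suc m. ca m k)"
    by (simp add: sum_subtractf sum_distrib_left)
  finally show ?thesis unfolding A1_closed A2_closed by simp
qed


lemma poch2: "pochhammer (2::real) k = fact (Suc k)"
proof -
  have "fact (Suc k) = (pochhammer 1 (Suc k) :: real)" by (rule pochhammer_fact)
  also have "\<dots> = pochhammer 2 k" by (simp add: pochhammer_rec)
  finally show ?thesis by simp
qed

lemma poch_negnat: "pochhammer (- real m) k = (-1)^k * real (m choose k) * fact k"
proof -
  have "pochhammer (- real m) k = (-1)^k * pochhammer (real m - of_nat k + 1) k" by (rule pochhammer_minus)
  moreover have "real (m choose k) = pochhammer (real m - of_nat k + 1) k / fact k"
    unfolding binomial_gbinomial by (rule gbinomial_pochhammer')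
  ultimately show ?thesis by simp
qed

lemma ratio_choose:
  assumes "k \<le> m"
  shows "real (m choose k) * real ((2*m) choose m) = real ((2*m) choose k) * real ((2*m-k) choose m)"
proof -
  have "((2*m) choose m) * (m choose k) = ((2*m) choose k) * ((2*m - k) choose (m - k))"
    using choose_mult[of k m "2*m"] assms by simp
  moreover have "(2*m - k) choose (m - k) = (2*m-k) choose m"
    using binomial_symmetric[of "m-k" "2*m-k"] assms by simp
  ultimately have "(m choose k) * ((2*m) choose m) = ((2*m) choose k) * ((2*m-k) choose m)"
    by (simp add: mult.commute)
  then show ?thesis by (metis of_nat_mult)
qed

lemma hyp_sum: "hyp3F2 (m+2) = (\<Sum>k<Suc m. real (k+1)^2 * 2^k * real ((2*m-k) choose m)) / real ((2*m) choose m)"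
proof -
  have r1: "2 - real (m+2) = - real m" by simp
  have r2: "4 - 2 * real (m+2) = - real (2*m)" by simp
  have "hyp3F2 (m+2) = (\<Sum>k<Suc m.
      (pochhammer 2 k * pochhammer 2 k * pochhammer (2 - real (m+2)) k)
      / (pochhammer 1 k * pochhammer (4 - 2 * real (m+2)) k) * 2 ^ k / fact k)"
    unfolding hyp3F2_def by (simp add: atLeast0AtMost lessThan_Suc_atMost)
  also have "\<dots> = (\<Sum>k<Suc m. real (k+1)^2 * 2^k * real ((2*m-k) choose m) / real ((2*m) choose m))"
  proof (rule sum.cong[OF refl])
    fix k assume "k \<in> {..<Suc m}"
    then have km: "k \<le> m" by simp
    define a where "a = real (m choose k)"
    define b where "b = real ((2*m) choose k)"
    define c where "c = real ((2*m-k) choose m)"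
    define d where "d = real ((2*m) choose m)"
    define F where "F = (fact k :: real)"
    have ad: "a * d = b * c" unfolding a_def b_def c_def d_def by (rule ratio_choose[OF km])
    have nz: "b \<noteq> 0" "d \<noteq> 0" "F \<noteq> 0" using km by (simp_all add: b_def d_def F_def)
    have fs: "(fact (Suc k) :: real) = real (k+1) * F" by (simp add: F_def)
    have "(pochhammer 2 k * pochhammer 2 k * pochhammer (2 - real (m+2)) k)
      / (pochhammer 1 k * pochhammer (4 - 2 * real (m+2)) k) * 2 ^ k / fact k
      = (real (k+1) * F) * (real (k+1) * F) * ((-1)^k * a * F) / (F * ((-1)^k * b * F)) * 2^k / F"
      unfolding r1 r2 poch_negnat poch2 fs by (simp add: a_def b_def F_def pochhammer_fact)
    also have "\<dots> = real (k+1)^2 * 2^k * (a / b)" using nz by (simp add: field_simps power2_eq_square)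
    also have "a / b = c / d" using ad nz by (simp add: field_simps)
    finally show "(pochhammer 2 k * pochhammer 2 k * pochhammer (2 - real (m+2)) k)
      / (pochhammer 1 k * pochhammer (4 - 2 * real (m+2)) k) * 2 ^ k / fact k
      = real (k+1)^2 * 2^k * real ((2*m-k) choose m) / real ((2*m) choose m)"
      by (simp add: c_def d_def)
  qed
  also have "\<dots> = (\<Sum>k<Suc m. real (k+1)^2 * 2^k * real ((2*m-k) choose m)) / real ((2*m) choose m)"
    by (rule sum_divide_distrib[symmetric])
  finally show ?thesis .
qed

lemma dfact_even_fact: "real (dfact (2*m)) = 2^m * fact m"
proof (induction m)
  case 0 then show ?case by simp
next
  case (Suc m)
  have "2 * Suc m = Suc (Suc (2*m))" by simp
  then show ?case using Suc by (simp add: algebra_simps)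
qed

lemma dfact_odd_fact: "real (dfact (2*m+1)) * 2^m * fact m = fact (2*m+1)"
proof (induction m)
  case 0 then show ?case by simp
next
  case (Suc m)
  have e: "2 * Suc m + 1 = Suc (Suc (2*m+1))" by simp
  have "real (dfact (2 * Suc m + 1)) * 2 ^ Suc m * fact (Suc m)
     = (2 * real m + 3) * (2 * real m + 2) * (real (dfact (2*m+1)) * 2^m * fact m)"
    unfolding e by (simp add: algebra_simps)
  also have "\<dots> = (2 * real m + 3) * (2 * real m + 2) * fact (2*m+1)" using Suc by simp
  also have "\<dots> = fact (2 * Suc m + 1)" unfolding e by (simp add: algebra_simps)
  finally show ?case .
qed

lemma hyp_closed:
  assumes n: "n \<ge> 2"
  shows "hyp3F2 n = (2 * real n - 3) * (real (dfact (2*n-2)) / real (dfact (2*n-3)) - 1)"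
proof -
  define m where "m = n - 2"
  have nm: "n = m + 2" using n by (simp add: m_def)
  have e1: "2*n-2 = 2*(m+1)" and e2: "2*n-3 = 2*m+1" using nm by auto
  define F where "F = (fact m :: real)"
  define P where "P = (2::real)^m"
  define d where "d = real ((2*m) choose m)"
  have nz: "F \<noteq> 0" "P \<noteq> 0" "d \<noteq> 0" by (simp_all add: F_def P_def d_def)
  have D: "real (dfact (2*n-2)) = 2 * P * (real m + 1) * F"
    unfolding e1 dfact_even_fact by (simp add: P_def F_def algebra_simps)
  have f2m: "(fact (2*m) :: real) = F * F * d"
    using binomial_fact_lemma[of m "2*m"] unfolding F_def d_def
    by (metis (mono_tags) mult_2 add_diff_cancel_left' le_add1 of_nat_fact of_nat_mult)
  have C: "real (dfact (2*n-3)) * P * F = (2 * real m + 1) * (F * F * d)"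
    unfolding e2 P_def F_def using dfact_odd_fact[of m] f2m[unfolded F_def d_def] by (simp add: d_def algebra_simps)
  have C': "(real (dfact (2*n-3)) * P) * F = ((2*real m+1)*F*d) * F" using C by (simp add: algebra_simps)
  then have C'': "real (dfact (2*n-3)) * P = (2*real m+1)*F*d" by (metis mult_right_cancel nz(1))
  define Q where "Q = 2 * real m + 1"
  have Qnz: "Q \<noteq> 0" unfolding Q_def by (simp add: add_nonneg_eq_0_iff)
  have Cv: "real (dfact (2*n-3)) = Q * F * d / P"
    using C'' nz(2) by (simp add: eq_divide_eq Q_def)
  have nQ: "2 * real n - 3 = Q" by (simp add: nm Q_def)
  have four: "(4::real)^m = P * P"
  proof -
    have "(4::real)^m = (2*2)^m" by simp
    also have "\<dots> = P * P" by (simp only: power_mult_distrib P_def)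
    finally show ?thesis .
  qed
  have "hyp3F2 n = (2 * (real m + 1) * (P*P) - Q * d) / d"
    unfolding nm hyp_sum f_closed four d_def Q_def ..
  also have "\<dots> = (2 * real n - 3) * (real (dfact (2*n-2)) / real (dfact (2*n-3)) - 1)"
    unfolding D Cv nQ using nz Qnz by (simp add: field_simps)
  finally show ?thesis .
qed


lemma DC_ratio: "real (dfact (2*m+2)) / real (dfact (2*m+1))
   = 2 * (real m + 1) * 4^m / ((2 * real m + 1) * real ((2*m) choose m))"
proof -
  define F where "F = (fact m :: real)"
  define P where "P = (2::real)^m"
  define d where "d = real ((2*m) choose m)"
  define Q where "Q = 2 * real m + 1"
  have nz: "F \<noteq> 0" "P \<noteq> 0" "d \<noteq> 0" "Q \<noteq> 0" by (simp_all add: F_def P_def d_def Q_def add_nonneg_eq_0_iff)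
  have D: "real (dfact (2*m+2)) = 2 * P * (real m + 1) * F"
    using dfact_even_fact[of "m+1"] by (simp add: P_def F_def algebra_simps)
  have f2m: "(fact (2*m) :: real) = F * F * d"
    using binomial_fact_lemma[of m "2*m"] unfolding F_def d_def
    by (metis (mono_tags) mult_2 add_diff_cancel_left' le_add1 of_nat_fact of_nat_mult)
  have C: "real (dfact (2*m+1)) * P * F = Q * (F * F * d)"
    unfolding P_def F_def Q_def using dfact_odd_fact[of m] f2m[unfolded F_def d_def] by (simp add: d_def algebra_simps)
  have C': "(real (dfact (2*m+1)) * P) * F = (Q*F*d) * F" using C by (simp add: algebra_simps)
  then have C'': "real (dfact (2*m+1)) * P = Q*F*d" by (metis mult_right_cancel nz(1))
  have Cv: "real (dfact (2*m+1)) = Q * F * d / P"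
    using C'' nz(2) by (simp add: eq_divide_eq)
  have four: "(4::real)^m = P * P"
  proof -
    have "(4::real)^m = (2*2)^m" by simp
    also have "\<dots> = P * P" by (simp only: power_mult_distrib P_def)
    finally show ?thesis .
  qed
  show ?thesis unfolding D Cv four d_def[symmetric] Q_def[symmetric] using nz by (simp add: field_simps)
qed

lemma G: "inverse (Gamma (- (-1/2::real))) = 1 / sqrt pi"
proof -
  have "- (-1/2::real) = 1/2" by simp
  then show ?thesis by (simp only: Gamma_one_half_real inverse_eq_divide)
qed
lemma e: "n > 0 \<Longrightarrow> exp (((-1/2) + 1) * of_real (ln (real n))) = sqrt (real n)"
proof -
  assume n: "n > 0"
  have "sqrt (real n) = exp (ln (sqrt (real n)))" using n by simp
  also have "ln (sqrt (real n)) = ln (real n) / 2" using n by (simp add: ln_sqrt)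
  finally show ?thesis by simp
qed
lemma gb: "((-1/2::real) gchoose n) = (-1)^n * pochhammer (1/2) n / fact n"
  by (subst gbinomial_pochhammer) simp

lemma w_lim: "(\<lambda>m. real ((2*m) choose m) * sqrt (real m) / 4^m) \<longlonglongrightarrow> 1 / sqrt pi"
proof -
  have g: "(\<lambda>n. ((-1/2::real) gchoose n) / ((-1)^n / exp (((-1/2) + 1) * of_real (ln (real n)))))
      \<longlonglongrightarrow> inverse (Gamma (- (-1/2::real)))"
    by (rule gbinomial_asymptotic)
  have ev: "\<forall>\<^sub>F n in sequentially. ((-1/2::real) gchoose n) / ((-1)^n / exp (((-1/2) + 1) * of_real (ln (real n))))
      = real ((2*n) choose n) * sqrt (real n) / 4^n"
    using eventually_gt_at_top[of "0::nat"]
  proof eventually_elim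
    fix n :: nat assume n: "n > 0"
    have fd: "(fact (2*n) :: real) = 2^(2*n) * pochhammer (1/2) n * fact n" by (rule fact_double)
    have bf: "real ((2*n) choose n) = fact (2*n) / (fact n * fact n)"
      using binomial_fact[of n "2*n"] by (simp add: mult_2)
    have p4: "(2::real)^(2*n) = 4^n" by (simp add: power_mult)
    define F where "F = (fact n :: real)"
    define Q where "Q = pochhammer (1/2::real) n"
    define S where "S = sqrt (real n)"
    have nz: "F \<noteq> 0" "S \<noteq> 0" using n by (simp_all add: F_def S_def)
    show "((-1/2::real) gchoose n) / ((-1)^n / exp (((-1/2) + 1) * of_real (ln (real n))))
      = real ((2*n) choose n) * sqrt (real n) / 4^n"
      unfolding e[OF n] gb bf fd p4 F_def[symmetric] Q_def[symmetric] S_def[symmetric]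
      using nz by (simp add: field_simps)
  qed
  show ?thesis using Lim_transform_eventually[OF g ev] G by simp
qed

lemma choose2: "real (n choose 2) = real n * (real n - 1) / 2"
proof (induction n)
  case 0 then show ?case by simp
next
  case (Suc n)
  have "Suc n choose 2 = n + (n choose 2)" by (simp add: numeral_2_eq_2)
  then show ?case using Suc by (simp add: field_simps)
qed

lemma part1:
  assumes n: "n \<ge> 3"
  shows "E_U_Phi n = real (n choose 2) * (1 / real (2 * n - 3) * hyp3F2 n
               - 1 / 2 * real (dfact (2 * n - 2)) / real (dfact (2 * n - 3)))"
proof -
  define D where "D = real (dfact (2 * n - 2))"
  define C where "C = real (dfact (2 * n - 3))"
  define T where "T = 2 * real n - 3"
  have Cnz: "C \<noteq> 0" using dfact_pos[of "2*n-3"] by (simp add: C_def)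
  have Tnz: "T \<noteq> 0" using n by (simp add: T_def)
  have r: "real (2 * n - 3) = T" using n by (simp add: T_def of_nat_diff)
  have h: "hyp3F2 n = T * (D / C - 1)" using hyp_closed[of n] n by (simp add: T_def D_def C_def)
  have E: "E_U_Phi n = real n * (real n - 1) / 2 * (D / (2 * C) - 1)" using E_closed[of n] n
    by (simp add: D_def C_def)
  show ?thesis unfolding E r h choose2 D_def[symmetric] C_def[symmetric]
    using Cnz Tnz by (simp add: field_simps)
qed

lemma part2: "E_U_Phi \<sim>[at_top] (\<lambda>n. sqrt pi / 4 * real n powr (5 / 2))"
proof (rule asymp_equivI')
  define c where "c = sqrt pi / 4"
  have cnz: "c \<noteq> 0" by (simp add: c_def)
  define w where "w = (\<lambda>m. real ((2*m) choose m) * sqrt (real m) / 4^m)"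
  define a where "a = (\<lambda>m::nat. (real m+2)*(real m+1)*(real m+1)* sqrt (real m)/(2*(2*real m+1)*(real m+2) powr (5/2)))"
  define b where "b = (\<lambda>m::nat. (real m+2)*(real m+1)/(2*(real m+2) powr (5/2)))"
  have la: "a \<longlonglongrightarrow> 1/4" unfolding a_def by real_asymp
  have lb: "b \<longlonglongrightarrow> 0" unfolding b_def by real_asymp
  have lw: "w \<longlonglongrightarrow> 1 / sqrt pi" unfolding w_def by (rule w_lim)
  have lim: "(\<lambda>m. a m / c * inverse (w m) - b m / c) \<longlonglongrightarrow> (1/4) / c * inverse (1 / sqrt pi) - 0 / c"
    by (intro tendsto_intros la lb lw cnz) simp
  have val: "(1/4) / c * inverse (1 / sqrt pi) - 0 / c = (1::real)" by (simp add: c_def)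
  have ev: "\<forall>\<^sub>F m in sequentially. a m / c * inverse (w m) - b m / c
      = E_U_Phi (m + 2) / (sqrt pi / 4 * real (m + 2) powr (5 / 2))"
    using eventually_ge_at_top[of "1::nat"]
  proof eventually_elim
    fix m :: nat assume m: "m \<ge> 1"
    define M where "M = real m"
    define S where "S = sqrt M"
    define d where "d = real ((2*m) choose m)"
    define F4 where "F4 = (4::real)^m"
    define Pw where "Pw = (M + 2) powr (5/2)"
    define Q where "Q = 2 * M + 1"
    have Qnz: "Q \<noteq> 0" by (simp add: Q_def M_def add_nonneg_eq_0_iff)
    have nz: "S \<noteq> 0" "d \<noteq> 0" "F4 \<noteq> 0" "Pw \<noteq> 0" "2 * M + 1 \<noteq> 0" "M + 1 \<noteq> 0" "M + 2 \<noteq> 0"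
      using m by (simp_all add: S_def M_def d_def F4_def Pw_def add_nonneg_eq_0_iff)
    have e1: "2 * (m + 2) - 2 = 2*m+2" "2 * (m+2) - 3 = 2*m+1" by auto
    have E: "E_U_Phi (m+2) = (M+2) * (M+1) / 2 * ((real (dfact (2*m+2)) / real (dfact (2*m+1))) / 2 - 1)"
      using E_closed[of "m+2"] unfolding e1 by (simp add: M_def field_simps)
    have DC: "real (dfact (2*m+2)) / real (dfact (2*m+1)) = 2 * (M + 1) * F4 / (Q * d)"
      using DC_ratio[of m] by (simp add: M_def F4_def d_def Q_def)
    have wv: "w m = d * S / F4" by (simp add: w_def d_def S_def M_def F4_def)
    have av: "a m = (M+2)*(M+1)*(M+1)* S/(2*Q*Pw)" by (simp add: a_def M_def S_def Pw_def Q_def)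
    have bv: "b m = (M+2)*(M+1)/(2*Pw)" by (simp add: b_def M_def Pw_def)
    have pv: "sqrt pi / 4 * real (m + 2) powr (5 / 2) = c * Pw" by (simp add: c_def Pw_def M_def add.commute)
    show "a m / c * inverse (w m) - b m / c = E_U_Phi (m + 2) / (sqrt pi / 4 * real (m + 2) powr (5 / 2))"
      unfolding E DC wv av bv pv using nz cnz Qnz by (simp add: field_simps)
  qed
  have "(\<lambda>m. E_U_Phi (m + 2) / (sqrt pi / 4 * real (m + 2) powr (5 / 2))) \<longlonglongrightarrow> 1"
    using Lim_transform_eventually[OF lim ev] val by simp
  then show "(\<lambda>n. E_U_Phi n / (sqrt pi / 4 * real n powr (5 / 2))) \<longlonglongrightarrow> 1"
    by (rule LIMSEQ_offset)
qed

theorem mainTheorem19: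
  shows "(\<forall>n\<ge>3. E_U_Phi n =
            real (n choose 2) *
              (1 / real (2 * n - 3) * hyp3F2 n
               - 1 / 2 * real (dfact (2 * n - 2)) / real (dfact (2 * n - 3))))
         \<and> (E_U_Phi \<sim>[at_top] (\<lambda>n. sqrt pi / 4 * real n powr (5 / 2)))"
  using part1 part2 by blast


end
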